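(* Let $d\ge2$, $n\ge1$, $\gamma$ a positive conductivity on the lattice graph below, and $d-1\le t\le dn-1$. Then $\ker T_1^{(t)}=\ker T^{(t)}$.
   Context: Lattice: $D=\{x\in\mathbb Z^d:1\le x_i\le n\ \forall i\}$, $\partial D=\{p\in\mathbb Z^d:\min_{q\in D}\|q-p\|_{\ell^1}=1\}$; $E$ = unordered pairs $pq\subseteq D\cup\partial D$ with $\|p-q\|_{\ell^1}=1$, not both in $\partial D$; $\mathcal N(p)=\{q:pq\in E\}$; each $b\in\partial D$ has a unique neighbour $q_b\in D$. Conductivity $\gamma:E\to(0,\infty)$, symmetric. $S_\gamma\varphi$ is the unique $\mathbf u\in\mathbb R^{D\cup\partial D}$ with $\sum_{q\in\mathcal N(p)}\gamma_{pq}(\mathbf u_q-\mathbf u_p)=0$ for all $p\in D$, $\mathbf u=\varphi$ on $\partial D$; $\Lambda_\gamma\varphi=(\gamma_{bq_b}(\mathbf u_{q_b}-\mathbf u_b))_{b\in\partial D}$ with $\mathbf u=S_\gamma\varphi$ (the DtN matrix). Functions on subsets are extended by zero. With $s(x)=\sum_ix_i$: $L_t=\{x\in D:s(x)=t\}$, $K_t^+=\{x\in\partial D:s(x)=t,\max_ix_i=n+1\}$, $K_t^-=\{x\in\partial D:s(x)=t,\min_ix_i=0\}$, $K_t^{\mathcal S\pm}=\bigcup_{\ell\le t}K_\ell^\pm$, $J_t^{\mathcal S}=K_t^{\mathcal S-}\cup K_{t+1}^{\mathcal S+}$. $T^{(t)}:\mathbb R^{J_t^{\mathcal S}}\to\mathbb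 R^{\partial D\setminus J_t^{\mathcal S}}$, $\varphi\mapsto(\Lambda_\gamma\varphi)|_{\partial D\setminus J_t^{\mathcal S}}$ (the submatrix $\Lambda_\gamma(\partial D\setminus J_t^{\mathcal S};J_t^{\mathcal S})$); $T_1^{(t)}:\mathbb R^{J_t^{\mathcal S}}\to\mathbb R^{L_{t+1}}$, $\varphi\mapsto(S_\gamma\varphi)|_{L_{t+1}}$. *)

theory Defs
  imports Complex_Main
begin

text \<open>Lattice points of Z^d are represented as int lists of length d.\<close>

definition l1dist :: "int list \<Rightarrow> int list \<Rightarrow> int" where
  "l1dist p q = (\<Sum>i<length p. \<bar>p ! i - q ! i\<bar>)"

definition latD :: "nat \<Rightarrow> nat \<Rightarrow> int list set" where
  "latD d n = {x. length x = d \<and> (\<forall>i<d. 1 \<le> x ! i \<and> x ! i \<le> int n)}"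

definition bdry :: "nat \<Rightarrow> nat \<Rightarrow> int list set" where
  "bdry d n = {p. length p = d \<and> (\<exists>q\<in>latD d n. l1dist q p = 1)
                 \<and> (\<forall>q\<in>latD d n. 1 \<le> l1dist q p)}"

definition is_edge :: "nat \<Rightarrow> nat \<Rightarrow> int list \<Rightarrow> int list \<Rightarrow> bool" where
  "is_edge d n p q \<longleftrightarrow> p \<in> latD d n \<union> bdry d n \<and> q \<in> latD d n \<union> bdry d n
     \<and> l1dist p q = 1 \<and> \<not> (p \<in> bdry d n \<and> q \<in> bdry d n)"

definition nbrs :: "nat \<Rightarrow> nat \<Rightarrow> int list \<Rightarrow> int list set" where
  "nbrs d n p = {q. is_edge d n p q}"

definition conductivity :: "nat \<Rightarrow> nat \<Rightarrow> (int list \<Rightarrow> int list \<Rightarrow> real) \<Rightarrow> bool" where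
  "conductivity d n \<gamma> \<longleftrightarrow> (\<forall>p q. is_edge d n p q \<longrightarrow> \<gamma> p q > 0 \<and> \<gamma> p q = \<gamma> q p)"

definition solve :: "nat \<Rightarrow> nat \<Rightarrow> (int list \<Rightarrow> int list \<Rightarrow> real) \<Rightarrow> (int list \<Rightarrow> real) \<Rightarrow> (int list \<Rightarrow> real)" where
  "solve d n \<gamma> \<phi> = (THE u. (\<forall>p\<in>latD d n. (\<Sum>q\<in>nbrs d n p. \<gamma> p q * (u q - u p)) = 0)
       \<and> (\<forall>b\<in>bdry d n. u b = \<phi> b)
       \<and> (\<forall>x. x \<notin> latD d n \<union> bdry d n \<longrightarrow> u x = 0))"

definition inner_nbr :: "nat \<Rightarrow> nat \<Rightarrow> int list \<Rightarrow> int list" where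
  "inner_nbr d n b = (THE q. q \<in> latD d n \<and> is_edge d n b q)"

definition DtN :: "nat \<Rightarrow> nat \<Rightarrow> (int list \<Rightarrow> int list \<Rightarrow> real) \<Rightarrow> (int list \<Rightarrow> real) \<Rightarrow> (int list \<Rightarrow> real)" where
  "DtN d n \<gamma> \<phi> = (\<lambda>b. if b \<in> bdry d n then
       (let u = solve d n \<gamma> \<phi>; q = inner_nbr d n b in \<gamma> b q * (u q - u b)) else 0)"

definition lsum :: "int list \<Rightarrow> int" where "lsum x = sum_list x"

definition layer :: "nat \<Rightarrow> nat \<Rightarrow> int \<Rightarrow> int list set" where
  "layer d n t = {x\<in>latD d n. lsum x = t}"

definition Kplus :: "nat \<Rightarrow> nat \<Rightarrow> int \<Rightarrow> int list set" where
  "Kplus d n t = {x\<in>bdry d n. lsum x = t \<and> Max (set x) = int n + 1}"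

definition Kminus :: "nat \<Rightarrow> nat \<Rightarrow> int \<Rightarrow> int list set" where
  "Kminus d n t = {x\<in>bdry d n. lsum x = t \<and> Min (set x) = 0}"

definition KSplus :: "nat \<Rightarrow> nat \<Rightarrow> int \<Rightarrow> int list set" where
  "KSplus d n t = (\<Union>l\<in>{l. l \<le> t}. Kplus d n l)"

definition KSminus :: "nat \<Rightarrow> nat \<Rightarrow> int \<Rightarrow> int list set" where
  "KSminus d n t = (\<Union>l\<in>{l. l \<le> t}. Kminus d n l)"

definition JS :: "nat \<Rightarrow> nat \<Rightarrow> int \<Rightarrow> int list set" where
  "JS d n t = KSminus d n t \<union> KSplus d n (t + 1)"

text \<open>Vectors in R^J, represented as functions vanishing outside J.\<close>
definition vecs_on :: "int list set \<Rightarrow> (int list \<Rightarrow> real) set" where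
  "vecs_on J = {\<phi>. \<forall>x. x \<notin> J \<longrightarrow> \<phi> x = 0}"

text \<open>Kernel of T^(t) = Lambda(\<partial>D \ J; J).\<close>
definition kerT :: "nat \<Rightarrow> nat \<Rightarrow> (int list \<Rightarrow> int list \<Rightarrow> real) \<Rightarrow> int \<Rightarrow> (int list \<Rightarrow> real) set" where
  "kerT d n \<gamma> t = {\<phi>\<in>vecs_on (JS d n t).
       \<forall>b\<in>bdry d n - JS d n t. DtN d n \<gamma> \<phi> b = 0}"

text \<open>Kernel of T_1^(t): phi \<mapsto> (S phi) restricted to L_(t+1).\<close>
definition kerT1 :: "nat \<Rightarrow> nat \<Rightarrow> (int list \<Rightarrow> int list \<Rightarrow> real) \<Rightarrow> int \<Rightarrow> (int list \<Rightarrow> real) set" where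
  "kerT1 d n \<gamma> t = {\<phi>\<in>vecs_on (JS d n t).
       \<forall>x\<in>layer d n (t + 1). solve d n \<gamma> \<phi> x = 0}"

end

theory Submission
  imports Defs "Jordan_Normal_Form.Determinant"
begin


lemma l1dist_one:
  assumes "length p = length q" "l1dist p q = 1"
  shows "\<exists>j<length p. \<bar>p!j - q!j\<bar> = 1 \<and> (\<forall>i<length p. i \<noteq> j \<longrightarrow> q!i = p!i)"
proof -
  let ?f = "\<lambda>i. \<bar>p!i - q!i\<bar>"
  have "\<exists>j<length p. ?f j \<noteq> 0"
  proof (rule ccontr)
    assume "\<not> ?thesis" then have "l1dist p q = 0" unfolding l1dist_def by simp
    with assms show False by simp
  qed
  then obtain j where j: "j < length p" "?f j \<noteq> 0" by blast
  have split: "l1dist p q = ?f j + (\<Sum>i\<in>{..<length p}-{j}. ?f i)"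
    unfolding l1dist_def using j by (simp add: sum.remove)
  have nn: "(\<Sum>i\<in>{..<length p}-{j}. ?f i) \<ge> 0" by (rule sum_nonneg) simp
  have "?f j \<ge> 1" using j(2) by simp
  then have fj: "?f j = 1" and rest: "(\<Sum>i\<in>{..<length p}-{j}. ?f i) = 0"
    using split assms nn by linarith+
  from rest have "\<forall>i\<in>{..<length p}-{j}. ?f i = 0"
    by (subst (asm) sum_nonneg_eq_0_iff) auto
  then show ?thesis using j fj by auto
qed

lemma l1dist_ge1:
  assumes "length p = length q" "p \<noteq> q"
  shows "l1dist p q \<ge> 1"
proof -
  obtain i where i: "i < length p" "p!i \<noteq> q!i" using assms nth_equalityI by blast
  have "1 \<le> \<bar>p!i - q!i\<bar>" using i by simp
  also have "\<dots> \<le> l1dist p q" unfolding l1dist_def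
    by (rule member_le_sum) (use i in auto)
  finally show ?thesis .
qed

lemma l1dist_self: "l1dist p p = 0" by (simp add: l1dist_def)

lemma l1dist_sym: "length p = length q \<Longrightarrow> l1dist p q = l1dist q p"
  unfolding l1dist_def by (simp add: abs_minus_commute)

lemma l1dist_upd:
  assumes "j < length p" "\<bar>v - p!j\<bar> = 1"
  shows "l1dist p (p[j:=v]) = 1"
proof -
  have "l1dist p (p[j:=v]) = (\<Sum>i<length p. if i = j then \<bar>p!j - v\<bar> else 0)"
    unfolding l1dist_def by (rule sum.cong) (auto simp: nth_list_update)
  also have "\<dots> = 1" using assms by (simp add: abs_minus_commute)
  finally show ?thesis .
qed

lemma lsum_upd: "j < length p \<Longrightarrow> lsum (p[j:=v]) = lsum p + v - p!j"
  unfolding lsum_def by (induction p arbitrary: j) (auto split: nat.splits)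

lemma latD_len: "p \<in> latD d n \<Longrightarrow> length p = d" by (simp add: latD_def)
lemma bdry_len: "p \<in> bdry d n \<Longrightarrow> length p = d" by (simp add: bdry_def)

lemma D_not_bdry: "p \<in> latD d n \<Longrightarrow> p \<notin> bdry d n"
  unfolding bdry_def using l1dist_self by fastforce

lemma bdry_char:
  assumes "b \<in> bdry d n"
  shows "\<exists>j<d. (b!j = 0 \<or> b!j = int n + 1) \<and> (\<forall>i<d. i \<noteq> j \<longrightarrow> 1 \<le> b!i \<and> b!i \<le> int n)"
proof -
  obtain q where q: "q \<in> latD d n" "l1dist q b = 1" using assms by (auto simp: bdry_def)
  have lq: "length q = d" and lb: "length b = d" using q assms by (auto simp: latD_def bdry_def)
  obtain j where j: "j < d" "\<bar>q!j - b!j\<bar> = 1" "\<forall>i<d. i \<noteq> j \<longrightarrow> b!i = q!i"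
    using l1dist_one[of q b] q lq lb by auto
  have bnD: "b \<notin> latD d n" using assms D_not_bdry by blast
  have "\<not> (1 \<le> b!j \<and> b!j \<le> int n)"
  proof
    assume h: "1 \<le> b!j \<and> b!j \<le> int n"
    have "b \<in> latD d n" unfolding latD_def
    proof (intro CollectI conjI allI impI)
      fix i assume "i < d" then show "1 \<le> b!i" "b!i \<le> int n"
        using h j q(1) by (cases "i = j"; auto simp: latD_def)+
    qed (rule lb)
    with bnD show False by simp
  qed
  moreover have "1 \<le> q!j" "q!j \<le> int n" using q(1) j(1) by (auto simp: latD_def)
  ultimately have "b!j = 0 \<or> b!j = int n + 1" using j(2) by linarith
  moreover have "\<forall>i<d. i \<noteq> j \<longrightarrow> 1 \<le> b!i \<and> b!i \<le> int n" using j(3) q(1) by (auto simp: latD_def)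
  ultimately show ?thesis using j(1) by blast
qed

lemma upd_D:
  assumes "p \<in> latD d n" "j < d" "1 \<le> v" "v \<le> int n"
  shows "p[j:=v] \<in> latD d n"
  unfolding latD_def
proof (intro CollectI conjI allI impI)
  show "length (p[j:=v]) = d" using assms(1) by (simp add: latD_def)
  fix i assume i: "i < d"
  show "1 \<le> p[j:=v]!i" "p[j:=v]!i \<le> int n"
    using assms i by (cases "i = j"; simp add: latD_def)+
qed

lemma upd_bdry:
  assumes "p \<in> latD d n" "j < d" "\<bar>v - p!j\<bar> = 1" "\<not> (1 \<le> v \<and> v \<le> int n)"
  shows "p[j:=v] \<in> bdry d n"
  unfolding bdry_def
proof (intro CollectI conjI bexI ballI)
  show "length (p[j:=v]) = d" using assms(1) by (simp add: latD_def)
  show "l1dist p (p[j:=v]) = 1" using assms latD_len by (intro l1dist_upd) auto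
  show "p \<in> latD d n" by fact
next
  fix r assume r: "r \<in> latD d n"
  have lp: "length p = d" using assms(1) by (simp add: latD_def)
  have "1 \<le> r!j \<and> r!j \<le> int n" using r assms(2) by (simp add: latD_def)
  then have "r!j \<noteq> p[j:=v]!j" using assms(2,4) lp by auto
  then have "r \<noteq> p[j:=v]" by metis
  then show "1 \<le> l1dist r (p[j:=v])" using r assms(1) by (intro l1dist_ge1) (auto simp: latD_def)
qed

lemma nbrs_D: "p \<in> latD d n \<Longrightarrow> q \<in> nbrs d n p \<longleftrightarrow> (q \<in> latD d n \<union> bdry d n \<and> l1dist p q = 1)"
  using D_not_bdry unfolding nbrs_def is_edge_def by blast

lemma succ_nbr:
  assumes "p \<in> latD d n" "j < d"
  shows "p[j := p!j + 1] \<in> nbrs d n p"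
proof -
  have l: "length p = d" using assms latD_len by blast
  have "p[j := p!j + 1] \<in> latD d n \<union> bdry d n"
  proof (cases "p!j + 1 \<le> int n")
    case True
    then show ?thesis using assms upd_D[of p d n j "p!j+1"] by (auto simp: latD_def)
  next
    case False
    then show ?thesis using assms upd_bdry[of p d n j "p!j+1"] by auto
  qed
  moreover have "l1dist p (p[j := p!j + 1]) = 1" using l assms by (intro l1dist_upd) auto
  ultimately show ?thesis using nbrs_D assms(1) by blast
qed

lemma set_range: "length x = d \<Longrightarrow> \<forall>i<d. a \<le> x!i \<and> x!i \<le> b \<Longrightarrow> set x \<subseteq> {a..b}"
  by (auto simp: in_set_conv_nth)

lemma fin_DB: "finite (latD d n \<union> bdry d n)"
proof (rule finite_subset)
  show "latD d n \<union> bdry d n \<subseteq> {xs. set xs \<subseteq> {0..int n+1} \<and> length xs = d}"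
  proof
    fix x assume x: "x \<in> latD d n \<union> bdry d n"
    show "x \<in> {xs. set xs \<subseteq> {0..int n+1} \<and> length xs = d}"
    proof (cases "x \<in> latD d n")
      case True
      then have "length x = d" "\<forall>i<d. 0 \<le> x!i \<and> x!i \<le> int n + 1" by (auto simp: latD_def)
      then show ?thesis using set_range[of x d 0 "int n + 1"] by simp
    next
      case False
      then have xb: "x \<in> bdry d n" using x by blast
      then obtain j where j: "j<d" "(x!j = 0 \<or> x!j = int n + 1)" "(\<forall>i<d. i \<noteq> j \<longrightarrow> 1 \<le> x!i \<and> x!i \<le> int n)"
        using bdry_char by blast
      have "\<forall>i<d. 0 \<le> x!i \<and> x!i \<le> int n + 1"
      proof (intro allI impI)
        fix i assume "i < d"
        then show "0 \<le> x!i \<and> x!i \<le> int n + 1" using j by (cases "i = j") auto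
      qed
      then show ?thesis using xb bdry_len set_range[of x d 0 "int n + 1"] by simp
    qed
  qed
  show "finite {xs. set xs \<subseteq> {0..int n+1} \<and> length xs = d}"
    by (rule finite_lists_length_eq) simp
qed

lemma fin_nbrs: "finite (nbrs d n p)"
proof (rule finite_subset[OF _ fin_DB])
  show "nbrs d n p \<subseteq> latD d n \<union> bdry d n" unfolding nbrs_def is_edge_def by blast
qed



lemma minmax:
  assumes "length q = d" "j < d" "\<forall>i<d. i \<noteq> j \<longrightarrow> 1 \<le> q!i \<and> q!i \<le> int n"
  shows "q!j = 0 \<Longrightarrow> Min (set q) = 0 \<and> Max (set q) \<noteq> int n + 1"
    and "q!j = int n + 1 \<Longrightarrow> Max (set q) = int n + 1 \<and> Min (set q) \<noteq> 0"
proof -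
  have el: "\<forall>y\<in>set q. y = q!j \<or> (1 \<le> y \<and> y \<le> int n)"
  proof
    fix y assume "y \<in> set q"
    then obtain i where "i < d" "q!i = y" using assms(1) by (auto simp: in_set_conv_nth)
    then show "y = q!j \<or> (1 \<le> y \<and> y \<le> int n)" using assms(3) by (cases "i = j") auto
  qed
  have jin: "q!j \<in> set q" using assms(1,2) by simp
  have fin: "finite (set q)" "set q \<noteq> {}" using jin by auto
  {
    assume z: "q!j = 0"
    have "Min (set q) = 0" using el z jin fin
      by (intro Min_eqI) auto
    moreover have "Max (set q) \<in> set q" using fin by (rule Max_in)
    then have "Max (set q) \<noteq> int n + 1" using el z by force
    ultimately show "Min (set q) = 0 \<and> Max (set q) \<noteq> int n + 1" by simp
  }
  {
    assume z: "q!j = int n + 1"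
    have "Max (set q) = int n + 1" using el z jin fin
      by (intro Max_eqI) auto
    moreover have "Min (set q) \<in> set q" using fin by (rule Min_in)
    then have "Min (set q) \<noteq> 0" using el z by force
    ultimately show "Max (set q) = int n + 1 \<and> Min (set q) \<noteq> 0" by simp
  }
qed

lemma upd_self: "j < length p \<Longrightarrow> \<forall>i<length p. i \<noteq> j \<longrightarrow> q!i = p!i \<Longrightarrow> length q = length p
   \<Longrightarrow> q = p[j := q!j]"
  by (intro nth_equalityI) (auto simp: nth_list_update)

lemma bdry_adj:
  assumes p: "p \<in> latD d n" and q: "q \<in> bdry d n" and pq: "l1dist p q = 1"
  shows "(Min (set q) = 0 \<and> Max (set q) \<noteq> int n + 1 \<and> lsum q = lsum p - 1)
       \<or> (Max (set q) = int n + 1 \<and> Min (set q) \<noteq> 0 \<and> lsum q = lsum p + 1)"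
proof -
  have lp: "length p = d" and lq: "length q = d" using p q latD_len bdry_len by auto
  obtain j where j: "j < d" "\<bar>p!j - q!j\<bar> = 1" "\<forall>i<d. i \<noteq> j \<longrightarrow> q!i = p!i"
    using l1dist_one[of p q] lp lq pq by auto
  have qeq: "q = p[j := q!j]" using upd_self[of j p q] j lp lq by simp
  have pj: "1 \<le> p!j" "p!j \<le> int n" using p j(1) by (auto simp: latD_def)
  have "\<not> (1 \<le> q!j \<and> q!j \<le> int n)"
  proof
    assume "1 \<le> q!j \<and> q!j \<le> int n"
    then have "p[j := q!j] \<in> latD d n" using upd_D[OF p j(1)] by auto
    then show False using qeq q D_not_bdry by metis
  qed
  then have cases: "(q!j = 0 \<and> p!j = 1) \<or> (q!j = int n + 1 \<and> p!j = int n)" using pj j(2) by linarith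
  have oth: "\<forall>i<d. i \<noteq> j \<longrightarrow> 1 \<le> q!i \<and> q!i \<le> int n" using j(3) p by (auto simp: latD_def)
  have ls: "lsum q = lsum p + q!j - p!j" using lsum_upd[of j p "q!j"] qeq j(1) lp by simp
  from cases show ?thesis
  proof
    assume c: "q!j = 0 \<and> p!j = 1"
    then show ?thesis using minmax(1)[OF lq j(1) oth] ls by simp
  next
    assume c: "q!j = int n + 1 \<and> p!j = int n"
    then show ?thesis using minmax(2)[OF lq j(1) oth] ls by simp
  qed
qed

lemma inner_aux:
  assumes q: "q \<in> latD d n" and qb: "l1dist q b = 1" and lb: "length b = d"
    and j: "j < d" "b!j = 0 \<or> b!j = int n + 1"
  shows "q = b[j := (if b!j = 0 then 1 else int n)]"
proof -
  have lq: "length q = d" using q latD_len by auto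
  obtain j' where j': "j' < d" "\<bar>q!j' - b!j'\<bar> = 1" "\<forall>i<d. i \<noteq> j' \<longrightarrow> b!i = q!i"
    using l1dist_one[of q b] lq lb qb by auto
  have qr: "\<forall>i<d. 1 \<le> q!i \<and> q!i \<le> int n" using q by (auto simp: latD_def)
  have "j' = j"
  proof (rule ccontr)
    assume "j' \<noteq> j"
    then have "b!j = q!j" using j'(3) j(1) by auto
    then show False using qr j by force
  qed
  then have qj: "q!j = (if b!j = 0 then 1 else int n)" using j'(2) qr j by auto
  show ?thesis
  proof (rule nth_equalityI)
    show "length q = length (b[j := (if b!j = 0 then 1 else int n)])" using lq lb by simp
    fix i assume "i < length q"
    then show "q!i = b[j := (if b!j = 0 then 1 else int n)] ! i"
      using qj j'(3) \<open>j' = j\<close> lq lb j(1) by (cases "i = j") (auto simp: nth_list_update)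
  qed
qed

lemma edge_bq:
  assumes "b \<in> bdry d n" "q \<in> latD d n" "l1dist q b = 1"
  shows "is_edge d n b q"
  using assms D_not_bdry l1dist_sym[of q b] latD_len bdry_len unfolding is_edge_def by auto

lemma inner_nbr_eq:
  assumes b: "b \<in> bdry d n" and q: "q \<in> latD d n" and qb: "l1dist q b = 1"
  shows "inner_nbr d n b = q"
proof -
  obtain j where j: "j < d" "b!j = 0 \<or> b!j = int n + 1" using bdry_char[OF b] by blast
  have lb: "length b = d" using b bdry_len by auto
  show ?thesis unfolding inner_nbr_def
  proof (rule the_equality)
    show "q \<in> latD d n \<and> is_edge d n b q" using edge_bq assms by auto
    fix q' assume q': "q' \<in> latD d n \<and> is_edge d n b q'"
    then have "l1dist q' b = 1" using l1dist_sym[of q' b] latD_len lb unfolding is_edge_def by auto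
    then show "q' = q" using inner_aux[OF _ _ lb j] q' inner_aux[OF q qb lb j] by auto
  qed
qed

lemma inner_nbr:
  assumes b: "b \<in> bdry d n"
  shows "inner_nbr d n b \<in> latD d n \<and> l1dist (inner_nbr d n b) b = 1 \<and> is_edge d n b (inner_nbr d n b)"
proof -
  obtain q where q: "q \<in> latD d n" "l1dist q b = 1" using b by (auto simp: bdry_def)
  then show ?thesis using inner_nbr_eq[OF b q] edge_bq[OF b q] by simp
qed

lemma JS_iff:
  assumes "b \<in> bdry d n"
  shows "b \<in> JS d n t \<longleftrightarrow> (Min (set b) = 0 \<and> lsum b \<le> t) \<or> (Max (set b) = int n + 1 \<and> lsum b \<le> t + 1)"
  using assms unfolding JS_def KSminus_def KSplus_def Kminus_def Kplus_def by auto

lemma maxpr: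
  fixes u :: "'a \<Rightarrow> real" and h :: "'a \<Rightarrow> int"
  assumes finR: "finite R" and finN: "\<forall>p\<in>R. finite (N p)" and gpos: "\<forall>p\<in>R. \<forall>q\<in>N p. g p q > 0"
    and harm: "\<forall>p\<in>R. (\<Sum>q\<in>N p. g p q * (u q - u p)) = 0"
    and out: "\<forall>p\<in>R. \<forall>q\<in>N p. q \<notin> R \<longrightarrow> u q \<le> 0"
    and wit: "\<forall>p\<in>R. \<exists>q\<in>N p. q \<in> R \<longrightarrow> h p < h q"
  shows "\<forall>p\<in>R. u p \<le> 0"
proof (rule ccontr)
  assume "\<not> (\<forall>p\<in>R. u p \<le> 0)"
  then obtain p0 where p0: "p0 \<in> R" "u p0 > 0" by force
  define M where "M = Max (u ` R)"
  have uM: "\<forall>p\<in>R. u p \<le> M" using finR by (simp add: M_def)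
  have Mpos: "M > 0" using uM p0 by force
  have "M \<in> u ` R" using finR p0 unfolding M_def by (intro Max_in) auto
  define S where "S = {p\<in>R. u p = M}"
  have finS: "finite S" using finR by (simp add: S_def)
  have Sne: "S \<noteq> {}" using \<open>M \<in> u ` R\<close> by (auto simp: S_def)
  define H where "H = Max (h ` S)"
  have "H \<in> h ` S" using finS Sne unfolding H_def by (intro Max_in) auto
  then obtain p where pS: "p \<in> S" "h p = H" by blast
  have hS: "\<forall>p'\<in>S. h p' \<le> H" using finS by (simp add: H_def)
  have pR: "p \<in> R" "u p = M" using pS by (auto simp: S_def)
  have le: "\<forall>q\<in>N p. u q \<le> M" using uM out pR Mpos by force
  have eq: "(\<Sum>q\<in>N p. g p q * (u p - u q)) = - (\<Sum>q\<in>N p. g p q * (u q - u p))"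
    by (simp add: sum_negf[symmetric] algebra_simps)
  have "(\<Sum>q\<in>N p. g p q * (u q - u p)) = 0" using harm pR(1) by blast
  then have s0: "(\<Sum>q\<in>N p. g p q * (u p - u q)) = 0" using eq by simp
  have nn: "\<forall>q\<in>N p. g p q * (u p - u q) \<ge> 0" using le gpos pR
    by (auto intro!: mult_nonneg_nonneg simp: less_imp_le)
  have "\<forall>q\<in>N p. g p q * (u p - u q) = 0" 
  proof -
    have "finite (N p)" using finN pR(1) by blast
    from sum_nonneg_eq_0_iff[OF this, of "\<lambda>q. g p q * (u p - u q)"] show ?thesis using s0 nn by blast
  qed
  then have allM: "\<forall>q\<in>N p. u q = M"
  proof (intro ballI)
    fix q assume "\<forall>q\<in>N p. g p q * (u p - u q) = 0" "q \<in> N p"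
    moreover have "g p q > 0" using gpos pR(1) \<open>q \<in> N p\<close> by blast
    ultimately show "u q = M" using pR(2) by force
  qed
  obtain q where q: "q \<in> N p" "q \<in> R \<longrightarrow> h p < h q" using wit pR by blast
  show False
  proof (cases "q \<in> R")
    case True
    then have "q \<in> S" using allM q by (simp add: S_def)
    then show False using hS pS q True by force
  next
    case False
    then show False using out pR q allM Mpos by force
  qed
qed



lemma lin_solve:
  fixes c :: "'a \<Rightarrow> 'a \<Rightarrow> real" and b :: "'a \<Rightarrow> real"
  assumes fin: "finite S"
    and inj: "\<And>x. \<forall>p\<in>S. (\<Sum>q\<in>S. c p q * x q) = 0 \<Longrightarrow> \<forall>q\<in>S. x q = 0"
  shows "\<exists>x. \<forall>p\<in>S. (\<Sum>q\<in>S. c p q * x q) = b p"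
proof -
  define N where "N = card S"
  obtain e where e: "bij_betw e {0..<N} S" using ex_bij_betw_nat_finite[OF fin] N_def by blast
  define A where "A = mat N N (\<lambda>(i,j). c (e i) (e j))"
  have A: "A \<in> carrier_mat N N" by (simp add: A_def)
  have sumS: "(\<Sum>q\<in>S. f q) = (\<Sum>j<N. f (e j))" for f :: "'a \<Rightarrow> real"
    using sum.reindex_bij_betw[OF e, of f] by (simp add: atLeast0LessThan)
  have Av: "(A *\<^sub>v v) $ i = (\<Sum>j<N. c (e i) (e j) * v $ j)" if "v \<in> carrier_vec N" "i < N" for v i
    using that by (simp add: A_def scalar_prod_def atLeast0LessThan mult.commute)
  define inv_e where "inv_e = inv_into {0..<N} e"
  have ie: "inv_e (e j) = j" if "j < N" for j
    using e that unfolding inv_e_def by (simp add: bij_betw_inv_into_left)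
  have eS: "e i \<in> S" if "i < N" for i using e that by (auto simp: bij_betw_def)
  have Se: "\<exists>i<N. p = e i" if "p \<in> S" for p using e that by (auto simp: bij_betw_def)
  have "det A \<noteq> 0"
  proof
    assume "det A = 0"
    then obtain v where v: "v \<in> carrier_vec N" "v \<noteq> 0\<^sub>v N" "A *\<^sub>v v = 0\<^sub>v N"
      using det_0_iff_vec_prod_zero_field[OF A] by blast
    define x where "x = (\<lambda>q. v $ (inv_e q))"
    have "\<forall>p\<in>S. (\<Sum>q\<in>S. c p q * x q) = 0"
    proof
      fix p assume "p \<in> S"
      then obtain i where i: "i < N" "p = e i" using Se by blast
      have "(\<Sum>q\<in>S. c p q * x q) = (\<Sum>j<N. c (e i) (e j) * v $ j)"
        unfolding sumS x_def i(2) by (rule sum.cong) (auto simp: ie)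
      also have "\<dots> = (A *\<^sub>v v) $ i" using Av[OF v(1) i(1)] by simp
      also have "\<dots> = 0" using v(3) i(1) by simp
      finally show "(\<Sum>q\<in>S. c p q * x q) = 0" .
    qed
    then have "\<forall>q\<in>S. x q = 0" by (rule inj)
    then have "v = 0\<^sub>v N" using v(1) eS ie unfolding x_def
      by (intro eq_vecI) (auto, metis)
    with v(2) show False by simp
  qed
  then have "A \<in> Units (ring_mat TYPE(real) N ())" by (rule det_non_zero_imp_unit[OF A])
  then obtain B where B: "B \<in> carrier_mat N N" "A * B = 1\<^sub>m N"
    by (auto simp: Units_def ring_mat_def)
  define w where "w = vec N (\<lambda>i. b (e i))"
  define v where "v = B *\<^sub>v w"
  have w: "w \<in> carrier_vec N" by (simp add: w_def)
  have v: "v \<in> carrier_vec N" using B w by (simp add: v_def)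
  have Avw: "A *\<^sub>v v = w" unfolding v_def
    using assoc_mult_mat_vec[OF A B(1) w, symmetric] B(2) w by simp
  define x where "x = (\<lambda>q. v $ (inv_e q))"
  show ?thesis
  proof (intro exI ballI)
    fix p assume "p \<in> S"
    then obtain i where i: "i < N" "p = e i" using Se by blast
    have "(\<Sum>q\<in>S. c p q * x q) = (\<Sum>j<N. c (e i) (e j) * v $ j)"
      unfolding sumS x_def i(2) by (rule sum.cong) (auto simp: ie)
    also have "\<dots> = (A *\<^sub>v v) $ i" using Av[OF v i(1)] by simp
    also have "\<dots> = b p" using Avw i by (simp add: w_def)
    finally show "(\<Sum>q\<in>S. c p q * x q) = b p" .
  qed
qed



lemma lat_zero:
  assumes cond: "conductivity d n \<gamma>" and d: "d \<ge> 1" and R: "R \<subseteq> latD d n"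
    and harm: "\<forall>p\<in>R. (\<Sum>q\<in>nbrs d n p. \<gamma> p q * (u q - u p)) = 0"
    and bd: "\<forall>p\<in>R. \<forall>q\<in>nbrs d n p. q \<notin> R \<longrightarrow> u q = 0"
  shows "\<forall>p\<in>R. u p = 0"
proof -
  have finR: "finite R" using R fin_DB finite_subset by blast
  have finN: "\<forall>p\<in>R. finite (nbrs d n p)" using fin_nbrs by blast
  have gpos: "\<forall>p\<in>R. \<forall>q\<in>nbrs d n p. \<gamma> p q > 0" using cond unfolding conductivity_def nbrs_def by blast
  have wit: "\<forall>p\<in>R. \<exists>q\<in>nbrs d n p. q \<in> R \<longrightarrow> lsum p < lsum q"
  proof
    fix p assume p: "p \<in> R"
    then have pD: "p \<in> latD d n" using R by blast
    have l: "length p = d" using pD latD_len by blast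
    have "p[0 := p!0+1] \<in> nbrs d n p" using succ_nbr[OF pD] d by simp
    moreover have "lsum (p[0 := p!0+1]) = lsum p + 1" using lsum_upd[of 0 p] l d by simp
    ultimately show "\<exists>q\<in>nbrs d n p. q \<in> R \<longrightarrow> lsum p < lsum q" by force
  qed
  have 1: "\<forall>p\<in>R. u p \<le> 0"
    by (rule maxpr[OF finR finN gpos harm _ wit]) (use bd in force)
  have harm': "\<forall>p\<in>R. (\<Sum>q\<in>nbrs d n p. \<gamma> p q * ((- u q) - (- u p))) = 0"
  proof
    fix p assume "p \<in> R"
    have "(\<Sum>q\<in>nbrs d n p. \<gamma> p q * ((- u q) - (- u p))) = - (\<Sum>q\<in>nbrs d n p. \<gamma> p q * (u q - u p))"
      by (simp add: sum_negf[symmetric] algebra_simps)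
    then show "(\<Sum>q\<in>nbrs d n p. \<gamma> p q * ((- u q) - (- u p))) = 0" using harm \<open>p \<in> R\<close> by simp
  qed
  have 2: "\<forall>p\<in>R. - u p \<le> 0"
    by (rule maxpr[where u = "\<lambda>x. - u x", OF finR finN gpos harm' _ wit]) (use bd in force)
  show ?thesis using 1 2 by force
qed

definition harmsol :: "nat \<Rightarrow> nat \<Rightarrow> (int list \<Rightarrow> int list \<Rightarrow> real) \<Rightarrow> (int list \<Rightarrow> real) \<Rightarrow> (int list \<Rightarrow> real) \<Rightarrow> bool" where
  "harmsol d n \<gamma> \<phi> u \<longleftrightarrow> (\<forall>p\<in>latD d n. (\<Sum>q\<in>nbrs d n p. \<gamma> p q * (u q - u p)) = 0)
       \<and> (\<forall>b\<in>bdry d n. u b = \<phi> b)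
       \<and> (\<forall>x. x \<notin> latD d n \<union> bdry d n \<longrightarrow> u x = 0)"

lemma sol_unique:
  assumes cond: "conductivity d n \<gamma>" and d: "d \<ge> 1"
    and u: "harmsol d n \<gamma> \<phi> u" and v: "harmsol d n \<gamma> \<phi> v"
  shows "u = v"
proof -
  let ?w = "\<lambda>x. u x - v x"
  have harm: "\<forall>p\<in>latD d n. (\<Sum>q\<in>nbrs d n p. \<gamma> p q * (?w q - ?w p)) = 0"
  proof
    fix p assume p: "p \<in> latD d n"
    have "(\<Sum>q\<in>nbrs d n p. \<gamma> p q * (?w q - ?w p)) =
       (\<Sum>q\<in>nbrs d n p. \<gamma> p q * (u q - u p)) - (\<Sum>q\<in>nbrs d n p. \<gamma> p q * (v q - v p))"
      by (simp add: sum_subtractf[symmetric] algebra_simps)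
    then show "(\<Sum>q\<in>nbrs d n p. \<gamma> p q * (?w q - ?w p)) = 0" using u v p unfolding harmsol_def by simp
  qed
  have bd: "\<forall>p\<in>latD d n. \<forall>q\<in>nbrs d n p. q \<notin> latD d n \<longrightarrow> ?w q = 0"
    using u v unfolding harmsol_def nbrs_def is_edge_def by auto
  have z: "\<forall>p\<in>latD d n. ?w p = 0" by (rule lat_zero[OF cond d _ harm bd]) simp
  show ?thesis
  proof
    fix x show "u x = v x"
      using z u v unfolding harmsol_def by (cases "x \<in> latD d n"; cases "x \<in> bdry d n") auto
  qed
qed

lemma coef_ident:
  fixes \<gamma> :: "int list \<Rightarrow> int list \<Rightarrow> real" and x :: "int list \<Rightarrow> real"
  assumes p: "p \<in> latD d n"
  defines "c \<equiv> \<lambda>p q. (if q \<in> nbrs d n p then \<gamma> p q else 0) - (if q = p then (\<Sum>r\<in>nbrs d n p. \<gamma> p r) else 0)"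
  shows "(\<Sum>q\<in>latD d n. c p q * x q) = (\<Sum>q\<in>nbrs d n p. \<gamma> p q * ((if q \<in> latD d n then x q else 0) - x p))"
proof -
  have finD: "finite (latD d n)" using fin_DB finite_subset by blast
  have finN: "finite (nbrs d n p)" by (rule fin_nbrs)
  let ?G = "\<Sum>r\<in>nbrs d n p. \<gamma> p r"
  have "(\<Sum>q\<in>latD d n. c p q * x q) = (\<Sum>q\<in>latD d n. (if q \<in> nbrs d n p then \<gamma> p q * x q else 0) - (if q = p then ?G * x q else 0))"
    unfolding c_def by (rule sum.cong) (auto simp: algebra_simps)
  also have "\<dots> = (\<Sum>q\<in>latD d n \<inter> nbrs d n p. \<gamma> p q * x q) - ?G * x p"
    using finD p by (simp add: sum_subtractf sum.inter_restrict)
  also have "\<dots> = (\<Sum>q\<in>nbrs d n p. (if q \<in> latD d n then \<gamma> p q * x q else 0)) - (\<Sum>q\<in>nbrs d n p. \<gamma> p q * x p)"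
    using finN by (simp add: sum.inter_restrict[symmetric] sum_distrib_right Int_commute)
  also have "\<dots> = (\<Sum>q\<in>nbrs d n p. \<gamma> p q * ((if q \<in> latD d n then x q else 0) - x p))"
    by (subst sum_subtractf[symmetric]) (rule sum.cong, auto simp: algebra_simps)
  finally show ?thesis .
qed

lemma sol_exists:
  assumes cond: "conductivity d n \<gamma>" and d: "d \<ge> 1"
  shows "\<exists>u. harmsol d n \<gamma> \<phi> u"
proof -
  define c where "c \<equiv> \<lambda>p q. (if q \<in> nbrs d n p then \<gamma> p q else 0) - (if q = p then (\<Sum>r\<in>nbrs d n p. \<gamma> p r) else 0)"
  define \<psi> where "\<psi> = (\<lambda>x. if x \<in> bdry d n then \<phi> x else 0)"
  have finD: "finite (latD d n)" using fin_DB finite_subset by blast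
  have ci: "(\<Sum>q\<in>latD d n. c p q * x q) = (\<Sum>q\<in>nbrs d n p. \<gamma> p q * ((if q \<in> latD d n then x q else 0) - x p))"
    if "p \<in> latD d n" for p x using coef_ident[OF that] unfolding c_def by simp
  have inj: "\<forall>q\<in>latD d n. x q = 0" if h: "\<forall>p\<in>latD d n. (\<Sum>q\<in>latD d n. c p q * x q) = 0" for x
  proof -
    let ?x = "\<lambda>y. if y \<in> latD d n then x y else 0"
    have harm: "\<forall>p\<in>latD d n. (\<Sum>q\<in>nbrs d n p. \<gamma> p q * (?x q - ?x p)) = 0"
      using h ci by simp
    have bd: "\<forall>p\<in>latD d n. \<forall>q\<in>nbrs d n p. q \<notin> latD d n \<longrightarrow> ?x q = 0" by simp
    have "\<forall>p\<in>latD d n. ?x p = 0" by (rule lat_zero[OF cond d _ harm bd]) simp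
    then show ?thesis by simp
  qed
  obtain x where x: "\<forall>p\<in>latD d n. (\<Sum>q\<in>latD d n. c p q * x q) = - (\<Sum>q\<in>nbrs d n p. \<gamma> p q * \<psi> q)"
    using lin_solve[where c = c and b = "\<lambda>p. - (\<Sum>q\<in>nbrs d n p. \<gamma> p q * \<psi> q)", OF finD inj] by blast
  define u where "u = (\<lambda>y. (if y \<in> latD d n then x y else 0) + \<psi> y)"
  have "harmsol d n \<gamma> \<phi> u" unfolding harmsol_def
  proof (intro conjI ballI allI impI)
    fix p assume p: "p \<in> latD d n"
    have psp: "\<psi> p = 0" using p D_not_bdry by (simp add: \<psi>_def)
    have "(\<Sum>q\<in>nbrs d n p. \<gamma> p q * (u q - u p)) =
        (\<Sum>q\<in>nbrs d n p. \<gamma> p q * ((if q \<in> latD d n then x q else 0) - x p)) + (\<Sum>q\<in>nbrs d n p. \<gamma> p q * \<psi> q)"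
      unfolding u_def using p psp by (simp add: sum.distrib[symmetric] algebra_simps)
    also have "\<dots> = 0" using ci[OF p, of x] x p by simp
    finally show "(\<Sum>q\<in>nbrs d n p. \<gamma> p q * (u q - u p)) = 0" .
  next
    fix b assume "b \<in> bdry d n"
    then show "u b = \<phi> b" using D_not_bdry unfolding u_def \<psi>_def by auto
  next
    fix y assume "y \<notin> latD d n \<union> bdry d n"
    then show "u y = 0" unfolding u_def \<psi>_def by auto
  qed
  then show ?thesis by blast
qed

lemma solve_props:
  assumes cond: "conductivity d n \<gamma>" and d: "d \<ge> 1"
  shows "harmsol d n \<gamma> \<phi> (solve d n \<gamma> \<phi>)"
proof -
  have eq: "solve d n \<gamma> \<phi> = (THE u. harmsol d n \<gamma> \<phi> u)" by (simp add: solve_def harmsol_def)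
  have "\<exists>!u. harmsol d n \<gamma> \<phi> u" using sol_exists[OF cond d] sol_unique[OF cond d] by blast
  then show ?thesis unfolding eq by (rule theI')
qed



lemma nbr_struct:
  assumes "length p = length q" "l1dist p q = 1"
  shows "\<exists>j<length p. \<bar>p!j - q!j\<bar> = 1 \<and> (\<forall>i<length p. i \<noteq> j \<longrightarrow> q!i = p!i) \<and> lsum q = lsum p + q!j - p!j"
proof -
  obtain j where j: "j < length p" "\<bar>p!j - q!j\<bar> = 1" "\<forall>i<length p. i \<noteq> j \<longrightarrow> q!i = p!i"
    using l1dist_one[OF assms] by blast
  obtain v where v: "q!j = v" by blast
  have qe: "q = p[j := v]" unfolding v[symmetric] by (rule upd_self) (use j assms(1) in auto)
  have "lsum q = lsum p + v - p!j" unfolding qe using j(1) by (rule lsum_upd)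
  then show ?thesis using j v by blast
qed

lemma lsum_nbr:
  assumes "length p = length q" "l1dist p q = 1"
  shows "lsum q = lsum p + 1 \<or> lsum q = lsum p - 1"
proof -
  obtain j where j: "j < length p" "\<bar>p!j - q!j\<bar> = 1" "lsum q = lsum p + q!j - p!j"
    using nbr_struct[OF assms] by blast
  then show ?thesis by linarith
qed

lemma lsum_le: "p \<in> latD d n \<Longrightarrow> lsum p \<le> int d * int n"
proof -
  assume p: "p \<in> latD d n"
  have "lsum p = (\<Sum>i = 0..<d. p!i)" using p by (simp add: lsum_def sum_list_sum_nth latD_def)
  also have "\<dots> \<le> (\<Sum>i = 0..<d. int n)" using p by (intro sum_mono) (auto simp: latD_def)
  finally show ?thesis by simp
qed

lemma dir1:
  assumes cond: "conductivity d n \<gamma>" and d: "d \<ge> 1"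
    and phi: "\<phi> \<in> vecs_on (JS d n t)"
    and lay: "\<forall>x\<in>layer d n (t + 1). solve d n \<gamma> \<phi> x = 0"
  shows "\<forall>b\<in>bdry d n - JS d n t. DtN d n \<gamma> \<phi> b = 0"
proof -
  define u where "u = solve d n \<gamma> \<phi>"
  have H: "harmsol d n \<gamma> \<phi> u" unfolding u_def by (rule solve_props[OF cond d])
  have ubd: "u b = 0" if "b \<in> bdry d n" "b \<notin> JS d n t" for b
    using H that phi unfolding harmsol_def vecs_on_def by auto
  define R where "R = {p\<in>latD d n. lsum p \<ge> t + 2}"
  have RD: "R \<subseteq> latD d n" by (auto simp: R_def)
  have harm: "\<forall>p\<in>R. (\<Sum>q\<in>nbrs d n p. \<gamma> p q * (u q - u p)) = 0" using H RD unfolding harmsol_def by blast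
  have bd: "\<forall>p\<in>R. \<forall>q\<in>nbrs d n p. q \<notin> R \<longrightarrow> u q = 0"
  proof (intro ballI impI)
    fix p q assume p: "p \<in> R" and q: "q \<in> nbrs d n p" and qR: "q \<notin> R"
    have pD: "p \<in> latD d n" and ps: "lsum p \<ge> t + 2" using p by (auto simp: R_def)
    have qq: "q \<in> latD d n \<union> bdry d n" "l1dist p q = 1" using q nbrs_D[OF pD] by auto
    show "u q = 0"
    proof (cases "q \<in> latD d n")
      case True
      have "lsum q = lsum p + 1 \<or> lsum q = lsum p - 1"
        using lsum_nbr[OF _ qq(2)] latD_len pD True by auto
      then have "lsum q = t + 1" using qR True ps by (auto simp: R_def)
      then show ?thesis using lay True unfolding u_def layer_def by auto
    next
      case False
      then have qB: "q \<in> bdry d n" using qq by blast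
      have "q \<notin> JS d n t" using bdry_adj[OF pD qB qq(2)] ps JS_iff[OF qB] by auto
      then show ?thesis using ubd qB by blast
    qed
  qed
  have zR: "\<forall>p\<in>R. u p = 0" by (rule lat_zero[OF cond d RD harm bd])
  show ?thesis
  proof
    fix b assume b: "b \<in> bdry d n - JS d n t"
    then have bB: "b \<in> bdry d n" and bJ: "b \<notin> JS d n t" by auto
    define q where "q = inner_nbr d n b"
    have q: "q \<in> latD d n" "l1dist q b = 1" using inner_nbr[OF bB] unfolding q_def by auto
    have nj: "\<not> ((Min (set b) = 0 \<and> lsum b \<le> t) \<or> (Max (set b) = int n + 1 \<and> lsum b \<le> t + 1))"
      using JS_iff[OF bB] bJ by blast
    have "lsum q \<ge> t + 1"
      using bdry_adj[OF q(1) bB q(2)]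
    proof (elim disjE conjE)
      assume "Min (set b) = 0" "lsum b = lsum q - 1"
      then show ?thesis using nj by linarith
    next
      assume "Max (set b) = int n + 1" "lsum b = lsum q + 1"
      then show ?thesis using nj by linarith
    qed
    then have "u q = 0"
    proof (cases "lsum q = t + 1")
      case True then show ?thesis using lay q unfolding u_def layer_def by auto
    next
      case False then show ?thesis using zR q \<open>lsum q \<ge> t + 1\<close> unfolding R_def by auto
    qed
    moreover have "u b = 0" using ubd bB bJ by blast
    ultimately show "DtN d n \<gamma> \<phi> b = 0" using bB unfolding DtN_def u_def q_def by (simp add: Let_def)
  qed
qed

lemma notJS:
  assumes "b \<in> bdry d n" "Min (set b) = 0 \<Longrightarrow> lsum b > t" "Max (set b) = int n + 1 \<Longrightarrow> lsum b > t + 1"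
  shows "b \<notin> JS d n t"
  using assms JS_iff[OF assms(1)] by force

definition mu :: "nat \<Rightarrow> nat \<Rightarrow> int list \<Rightarrow> int" where
  "mu d n p = (int n + 1) * (int d * int n - lsum p) + (int n - p!0)"

lemma mu_diff: "mu d n q - mu d n p = (int n + 1) * (lsum p - lsum q) + (p!0 - q!0)"
  by (simp add: mu_def algebra_simps)

lemma mu_nonneg: "p \<in> latD d n \<Longrightarrow> d \<ge> 1 \<Longrightarrow> mu d n p \<ge> 0"
proof -
  assume p: "p \<in> latD d n" and d: "d \<ge> 1"
  have "lsum p \<le> int d * int n" using lsum_le[OF p] .
  moreover have "p!0 \<le> int n" using p d by (auto simp: latD_def)
  ultimately show ?thesis unfolding mu_def by simp
qed

lemma dir2:
  assumes cond: "conductivity d n \<gamma>" and d: "d \<ge> 1"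
    and phi: "\<phi> \<in> vecs_on (JS d n t)"
    and dtn: "\<forall>b\<in>bdry d n - JS d n t. DtN d n \<gamma> \<phi> b = 0"
  shows "\<forall>x\<in>layer d n (t + 1). solve d n \<gamma> \<phi> x = 0"
proof -
  define u where "u = solve d n \<gamma> \<phi>"
  have H: "harmsol d n \<gamma> \<phi> u" unfolding u_def by (rule solve_props[OF cond d])
  have ubd: "u b = 0" if "b \<in> bdry d n" "b \<notin> JS d n t" for b
    using H that phi unfolding harmsol_def vecs_on_def by auto
  have uin: "u (inner_nbr d n b) = 0" if b: "b \<in> bdry d n" "b \<notin> JS d n t" for b
  proof -
    define q where "q = inner_nbr d n b"
    have e: "is_edge d n b q" using inner_nbr[OF b(1)] unfolding q_def by auto
    have g: "\<gamma> b q > 0" using cond e unfolding conductivity_def by blast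
    have "\<gamma> b q * (u q - u b) = 0" using dtn b unfolding DtN_def u_def q_def by (simp add: Let_def)
    then show ?thesis using g ubd[OF b] unfolding q_def by simp
  qed
  have main: "\<forall>p. p \<in> latD d n \<and> lsum p \<ge> t + 1 \<and> nat (mu d n p) = k \<longrightarrow> u p = 0" for k
  proof (induction k rule: less_induct)
    case (less k)
    have IH: "u q = 0" if "q \<in> latD d n" "lsum q \<ge> t + 1" "mu d n q < mu d n p" "nat (mu d n p) = k" for q p
    proof -
      have "nat (mu d n q) < k" using that mu_nonneg[OF that(1) d] by linarith
      then show ?thesis using less that by blast
    qed
    show ?case
    proof (intro allI impI)
      fix p assume pk: "p \<in> latD d n \<and> lsum p \<ge> t + 1 \<and> nat (mu d n p) = k"
      then have pD: "p \<in> latD d n" and ps: "lsum p \<ge> t + 1" and pk: "nat (mu d n p) = k" by auto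
      have lp: "length p = d" using pD latD_len by auto
      have p0: "1 \<le> p!0" "p!0 \<le> int n" using pD d by (auto simp: latD_def)
      show "u p = 0"
      proof (cases "p!0 = int n")
        case True
        define b where "b = p[0 := int n + 1]"
        have bB: "b \<in> bdry d n" unfolding b_def using upd_bdry[OF pD, of 0 "int n + 1"] d True by simp
        have pb: "l1dist p b = 1" unfolding b_def using l1dist_upd[of 0 p "int n + 1"] lp d True by simp
        have lb: "lsum b = lsum p + 1" unfolding b_def using lsum_upd[of 0 p] lp d True by simp
        have "Max (set b) = int n + 1 \<and> Min (set b) \<noteq> 0" using bdry_adj[OF pD bB pb] lb by linarith
        then have "b \<notin> JS d n t" using lb ps by (intro notJS[OF bB]) auto
        then have "u (inner_nbr d n b) = 0" using uin bB by blast
        then show ?thesis using inner_nbr_eq[OF bB pD pb] by simp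
      next
        case False
        define p' where "p' = p[0 := p!0 + 1]"
        have p'D: "p' \<in> latD d n" unfolding p'_def using upd_D[OF pD, of 0 "p!0+1"] d False p0 by simp
        have lp': "length p' = d" using p'D latD_len by auto
        have ls': "lsum p' = lsum p + 1" unfolding p'_def using lsum_upd[of 0 p] lp d by simp
        have p'0: "p'!0 = p!0 + 1" unfolding p'_def using lp d by simp
        have "mu d n p' < mu d n p" using mu_diff[of d n p' p] ls' p'0 by simp
        then have up': "u p' = 0" using IH[OF p'D _ _ pk] ls' ps by simp
        have pp': "l1dist p' p = 1"
          using l1dist_upd[of 0 p "p!0+1"] lp d l1dist_sym[of p p'] lp' unfolding p'_def by simp
        have pN: "p \<in> nbrs d n p'" using nbrs_D[OF p'D] pD pp' by blast
        have oth: "u q = 0" if q: "q \<in> nbrs d n p'" "q \<noteq> p" for q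
        proof -
          have qq: "q \<in> latD d n \<union> bdry d n" "l1dist p' q = 1" using q nbrs_D[OF p'D] by auto
          show "u q = 0"
          proof (cases "q \<in> latD d n")
            case False
            then have qB: "q \<in> bdry d n" using qq by blast
            have "q \<notin> JS d n t"
              using bdry_adj[OF p'D qB qq(2)]
            proof (elim disjE conjE)
              assume "Min (set q) = 0" "Max (set q) \<noteq> int n + 1" "lsum q = lsum p' - 1"
              then show ?thesis using ps ls' by (intro notJS[OF qB]) auto
            next
              assume "Max (set q) = int n + 1" "Min (set q) \<noteq> 0" "lsum q = lsum p' + 1"
              then show ?thesis using ps ls' by (intro notJS[OF qB]) auto
            qed
            then show ?thesis using ubd qB by blast
          next
            case True
            have lq: "length q = d" using True latD_len by auto
            obtain j where j: "j < d" "\<bar>p'!j - q!j\<bar> = 1" "\<forall>i<d. i \<noteq> j \<longrightarrow> q!i = p'!i"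
                "lsum q = lsum p' + q!j - p'!j"
              using nbr_struct[of p' q] lp' lq qq(2) by auto
            have lsq: "lsum q = lsum p' + q!j - p'!j" by (rule j(4))
            have q01: "1 \<le> q!0" using True d by (auto simp: latD_def)
            show ?thesis
            proof (cases "q!j = p'!j + 1")
              case True
              have "mu d n q < mu d n p" using mu_diff[of d n q p] lsq ls' True p0 q01 by simp
              then show ?thesis using IH[OF \<open>q \<in> latD d n\<close> _ _ pk] lsq ls' True ps by simp
            next
              case False
              then have qj: "q!j = p'!j - 1" using j(2) by linarith
              show ?thesis
              proof (cases "j = 0")
                case True
                have "q = p"
                proof (rule nth_equalityI)
                  show "length q = length p" using lq lp by simp
                  fix i assume "i < length q"
                  then show "q!i = p!i" using j(3) qj True p'0 lq unfolding p'_def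
                    by (cases "i = 0") (auto simp: nth_list_update)
                qed
                then show ?thesis using q(2) by simp
              next
                case False
                have q0: "q!0 = p'!0" using j(3) False d by auto
                have "mu d n q < mu d n p" using mu_diff[of d n q p] lsq ls' qj q0 p'0 by simp
                then show ?thesis using IH[OF \<open>q \<in> latD d n\<close> _ _ pk] lsq ls' qj ps by simp
              qed
            qed
          qed
        qed
        have finN: "finite (nbrs d n p')" by (rule fin_nbrs)
        have "0 = (\<Sum>q\<in>nbrs d n p'. \<gamma> p' q * (u q - u p'))" using H p'D unfolding harmsol_def by simp
        also have "\<dots> = \<gamma> p' p * (u p - u p') + (\<Sum>q\<in>nbrs d n p' - {p}. \<gamma> p' q * (u q - u p'))"
          using finN pN by (simp add: sum.remove)
        also have "(\<Sum>q\<in>nbrs d n p' - {p}. \<gamma> p' q * (u q - u p')) = 0"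
          using oth up' by (intro sum.neutral) auto
        finally have "\<gamma> p' p * u p = 0" using up' by simp
        moreover have "\<gamma> p' p > 0" using cond pN unfolding conductivity_def nbrs_def by blast
        ultimately show ?thesis by simp
      qed
    qed
  qed
  show ?thesis
  proof
    fix x assume "x \<in> layer d n (t + 1)"
    then have "x \<in> latD d n" "lsum x = t + 1" by (auto simp: layer_def)
    then show "solve d n \<gamma> \<phi> x = 0" using main unfolding u_def by auto
  qed
qed

theorem lemma4p1:
  fixes d n :: nat and t :: int and \<gamma> :: "int list \<Rightarrow> int list \<Rightarrow> real"
  assumes "d \<ge> 2" and "n \<ge> 1"
    and "conductivity d n \<gamma>"
    and "int d - 1 \<le> t" and "t \<le> int d * int n - 1"
  shows "kerT1 d n \<gamma> t = kerT d n \<gamma> t"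
proof -
  have d: "d \<ge> 1" using assms(1) by simp
  show ?thesis unfolding kerT1_def kerT_def
    using dir1[OF assms(3) d] dir2[OF assms(3) d] by blast
qed


end
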